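(* Let $\mathcal{A}=\{\mathtt n,\mathtt e,\mathtt w,\mathtt s\}$. Consider the quadruple comb context tree on $\mathcal{A}$, whose contexts are the words $\alpha^k\beta$ with $\alpha,\beta\in\mathcal{A}$, $\alpha\neq\beta$, $k\geq1$, and for each context $c$ let $q_c$ be a probability measure on $\mathcal{A}$ with $q_c(\gamma)>0$ for all $c$ and all $\gamma\in\mathcal{A}$. Let $(U_n)_{n\geq0}$ be the associated variable length Markov chain (VLMC), started from a right-infinite word $U_0$ with $X_{-1}=\mathtt n$, $X_0=\mathtt e$, and for $n\geq0$ let $X_n$ be the first (leftmost) letter of $U_n$, so that $U_n=X_nX_{n-1}\cdots X_0X_{-1}\cdots$. Assume that for all $\alpha\neq\beta$ in $\mathcal{A}$, $\lim_{n\to\infty}\prod_{k=1}^n q_{\alpha^k\beta}(\alpha)=0$. Define the breaking times $B_0=0$, $B_{n+1}=\inf\{k>B_n: X_k\neq X_{k-1}\}$; the sojourn times $T_0=0$, $T_n=B_n-B_{n-1}$ for $n\geq1$; the internal chain $J_0=\mathtt n\mathtt e$ and $J_n=X_{B_{n-1}}X_{B_n}$ for $n\geq1$ (a two-letter word, called a bend); and the bend process $(Z_j)_{j\geq0}$ by $Z_0=\mathtt n\mathtt e$ and, for $j\geq1$, $Z_j=\alpha\beta$ where $\beta=X_j$ and $\alpha$ is the first letter different from $\beta$ in the sequence $X_{j-1},X_{j-2},\dots$. Then $(J_n,T_n)_{n\geq0}$ is a Markov renewal chain on the set of bends $\{\alpha\beta:\alpha,\beta\in\mathcal{A},\alpha\neq\beta\}$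 with semi-Markov kernel \[ p_{\beta\alpha,\alpha\gamma}(k)=\Big(\prod_{j=1}^{k-1}q_{\alpha^j\beta}(\alpha)\Big)\,q_{\alpha^k\beta}(\gamma)\qquad(\beta\neq\alpha,\ \gamma\neq\alpha,\ k\geq1), \] all other kernel entries being $0$; $(Z_j)_{j\geq0}$ is the semi-Markov chain associated with $(J_n,T_n)_{n\geq0}$; and $(J_n,B_n)_{n\geq0}$ is a Markov additive process.
   Context: A VLMC defined by a context tree $\mathcal{T}$ (a saturated tree of finite words on $\mathcal{A}$ with at most countably many infinite branches; contexts are its leaves and infinite branches) and probability measures $(q_c)_c$ indexed by the contexts is the Markov chain $(U_n)$ on right-infinite words over $\mathcal{A}$ with transitions $\mathbb{P}(U_{n+1}=\alpha U_n\mid U_n)=q_{\mathrm{pref}(U_n)}(\alpha)$, where $\mathrm{pref}(w)$ is the unique context that is a prefix of $w$ (for the quadruple comb, $\mathrm{pref}(w)=\alpha^k\beta$ when $w$ begins with exactly $k$ copies of $\alpha$ followed by $\beta\neq\alpha$). Letters are identified with the vectors $\mathtt e=(1,0)$, $\mathtt n=(0,1)$, $\mathtt w=-\mathtt e$, $\mathtt s=-\mathtt n$ of $\mathbb{Z}^2$, and $S_n=\sum_{\ell=1}^nX_\ell$ is the two-dimensional persistent random walk. A Markov chain $(J_n,T_n)_{n\geq0}$ on $E\times\mathbb{N}$ is a Markov renewal chain if $\mathbb{P}(J_{n+1}=b,T_{n+1}=k\mid J_n=a,T_n=j)=\mathbb{P}(J_{n+1}=b,T_{n+1}=k\mid J_n=a)=:p_{a,b}(k)$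 for all $n,a,b,j,k$, with $p_{a,b}(0)=0$; $(p_{a,b}(k))$ is its semi-Markov kernel. If $T_0=0$ and $B_n=\sum_{i=0}^nT_i$, the associated semi-Markov chain is $(Z_j)_{j\geq0}$ with $Z_j=J_n$ for $B_n\leq j<B_{n+1}$. A Markov chain $(J_n,B_n)_{n\geq0}$ on $E\times\mathbb{N}$ is a Markov additive process if $(J_n,B_n-B_{n-1})_n$ is a Markov renewal chain. *)

theory Defs
  imports "HOL-Probability.Probability"
begin

text \<open>The alphabet {n, e, w, s}; letters stand for the unit vectors of Z^2.\<close>
datatype letter = N | E | W | S

text \<open>A context alpha^k beta (alpha \<noteq> beta, k \<ge> 1) of the quadruple comb is encoded
  as the triple (alpha, k, beta).\<close>
type_synonym ctxw = "letter \<times> nat \<times> letter"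

definition is_context :: "ctxw \<Rightarrow> bool" where
  "is_context c \<longleftrightarrow> (case c of (\<alpha>, k, \<beta>) \<Rightarrow> \<alpha> \<noteq> \<beta> \<and> k \<ge> 1)"

definition ctx :: "letter list \<Rightarrow> ctxw" where
  "ctx w = (hd w, length (takeWhile (\<lambda>c. c = hd w) w),
            hd (dropWhile (\<lambda>c. c = hd w) w))"

text \<open>For a path x (with x 0 = X_0, and the fixed letter X_(-1) = n), past x m is the
  word X_m X_(m-1) ... X_0 X_(-1).  Since X_0 = e \<noteq> n = X_(-1), the ctxw prefix
  of U_m is determined by this finite word.\<close>
definition past :: "(nat \<Rightarrow> letter) \<Rightarrow> nat \<Rightarrow> letter list" where
  "past x m = map (\<lambda>i. x (m - i)) [0..<Suc m] @ [N]"

type_synonym bend = "letter \<times> letter"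

definition bends :: "bend set" where
  "bends = {(\<alpha>, \<beta>). \<alpha> \<noteq> \<beta>}"

definition sm_kernel :: "(ctxw \<Rightarrow> letter pmf) \<Rightarrow> bend \<Rightarrow> bend \<Rightarrow> nat \<Rightarrow> real" where
  "sm_kernel q a b k =
     (case a of (\<beta>, \<alpha>) \<Rightarrow> case b of (\<alpha>', \<gamma>) \<Rightarrow>
        if \<beta> \<noteq> \<alpha> \<and> \<alpha>' = \<alpha> \<and> \<gamma> \<noteq> \<alpha> \<and> k \<ge> 1
        then (\<Prod>j\<in>{1..<k}. pmf (q (\<alpha>, j, \<beta>)) \<alpha>) * pmf (q (\<alpha>, k, \<beta>)) \<gamma>
        else 0)"

text \<open>B_0 = 0, B_(n+1) = inf {k > B_n. X_k \<noteq> X_(k-1)} (inf of the empty set = \<infinity>).\<close>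
primrec brk :: "(nat \<Rightarrow> letter) \<Rightarrow> nat \<Rightarrow> enat" where
  "brk x 0 = 0"
| "brk x (Suc n) = Inf {enat k | k. brk x n < enat k \<and> x k \<noteq> x (k - 1)}"

definition soj :: "(nat \<Rightarrow> letter) \<Rightarrow> nat \<Rightarrow> enat" where
  "soj x n = (if n = 0 then 0 else brk x n - brk x (n - 1))"

definition at_time :: "(nat \<Rightarrow> letter) \<Rightarrow> enat \<Rightarrow> letter" where
  "at_time x t = (case t of enat k \<Rightarrow> x k | \<infinity> \<Rightarrow> undefined)"

definition bendJ :: "(nat \<Rightarrow> letter) \<Rightarrow> nat \<Rightarrow> bend" where
  "bendJ x n = (if n = 0 then (N, E)
                else (at_time x (brk x (n - 1)), at_time x (brk x n)))"

definition bendZ :: "(nat \<Rightarrow> letter) \<Rightarrow> nat \<Rightarrow> bend" where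
  "bendZ x j = (if j = 0 then (N, E)
                else (the (find (\<lambda>c. c \<noteq> x j) (past x (j - 1))), x j))"

definition markov_chain_on ::
  "'a measure \<Rightarrow> 's set \<Rightarrow> (nat \<Rightarrow> 'a \<Rightarrow> 's) \<Rightarrow> ('s \<Rightarrow> 's \<Rightarrow> real) \<Rightarrow> bool" where
  "markov_chain_on M St Y P \<longleftrightarrow>
     (\<forall>n. Y n \<in> M \<rightarrow>\<^sub>M count_space UNIV) \<and>
     (AE \<omega> in M. \<forall>n. Y n \<omega> \<in> St) \<and>
     (\<forall>n (h :: nat \<Rightarrow> 's) s. (\<forall>i\<le>n. h i \<in> St) \<longrightarrow> s \<in> St \<longrightarrow>
        measure M {\<omega> \<in> space M. (\<forall>i\<le>n. Y i \<omega> = h i) \<and> Y (Suc n) \<omega> = s}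
        = P (h n) s * measure M {\<omega> \<in> space M. \<forall>i\<le>n. Y i \<omega> = h i})"

text \<open>(J_n, T_n) is a Markov renewal chain on Est \<times> N with semi-Markov sm_kernel p:
  a Markov chain on Est \<times> N whose transition probability from (a, j) to (b, k) is
  p a b k (independent of j), with p a b 0 = 0.  The second component is enat-valued
  (breaking times may a priori be infinite); values in N are demanded almost surely.\<close>
definition markov_renewal_chain ::
  "'a measure \<Rightarrow> 'e set \<Rightarrow> (nat \<Rightarrow> 'a \<Rightarrow> 'e) \<Rightarrow> (nat \<Rightarrow> 'a \<Rightarrow> enat)
     \<Rightarrow> ('e \<Rightarrow> 'e \<Rightarrow> nat \<Rightarrow> real) \<Rightarrow> bool" where
  "markov_renewal_chain M Est J T p \<longleftrightarrow>
     (\<forall>a b. p a b 0 = 0) \<and>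
     markov_chain_on M (Est \<times> range enat) (\<lambda>n \<omega>. (J n \<omega>, T n \<omega>))
       (\<lambda>(a, j) (b, k). case k of enat k' \<Rightarrow> p a b k' | \<infinity> \<Rightarrow> 0)"

definition semi_markov_assoc ::
  "(nat \<Rightarrow> 'e) \<Rightarrow> (nat \<Rightarrow> enat) \<Rightarrow> (nat \<Rightarrow> 'e) \<Rightarrow> bool" where
  "semi_markov_assoc J T Z \<longleftrightarrow>
     T 0 = 0 \<and>
     (\<forall>n j. (\<Sum>i\<le>n. T i) \<le> enat j \<and> enat j < (\<Sum>i\<le>Suc n. T i) \<longrightarrow> Z j = J n)"

definition markov_additive ::
  "'a measure \<Rightarrow> 'e set \<Rightarrow> (nat \<Rightarrow> 'a \<Rightarrow> 'e) \<Rightarrow> (nat \<Rightarrow> 'a \<Rightarrow> enat)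
     \<Rightarrow> ('e \<Rightarrow> 'e \<Rightarrow> nat \<Rightarrow> real) \<Rightarrow> bool" where
  "markov_additive M Est J B p \<longleftrightarrow>
     (\<exists>P. markov_chain_on M (Est \<times> range enat) (\<lambda>n \<omega>. (J n \<omega>, B n \<omega>)) P) \<and>
     markov_renewal_chain M Est J
       (\<lambda>n \<omega>. if n = 0 then B 0 \<omega> else B n \<omega> - B (n - 1) \<omega>) p"

end

theory Submission
  imports Defs
begin


instance letter :: countable by countable_datatype

lemma UNIV_letter: "(UNIV :: letter set) = {N, E, W, S}"
  by (auto intro: letter.exhaust)

lemma finite_letter[simp]: "finite (UNIV :: letter set)"
  by (simp add: UNIV_letter)

section \<open>Pathwise facts\<close>

declare brk.simps(2)[simp del]

lemma brk_Suc_def: "brk y (Suc n) = Inf {enat k | k. brk y n < enat k \<and> y k \<noteq> y (k - 1)}"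
  by (simp add: brk.simps(2))

lemma brk_inf_Suc: "brk y n = \<infinity> \<Longrightarrow> brk y (Suc n) = \<infinity>"
  by (simp add: brk_Suc_def Inf_enat_def)

lemma brk_mono_Suc: "brk y n \<le> brk y (Suc n)"
  unfolding brk_Suc_def by (rule Inf_greatest) auto

lemma brk_Suc_enat:
  "brk y (Suc n) = enat m \<longleftrightarrow>
    (brk y n < enat m \<and> y m \<noteq> y (m - 1) \<and> (\<forall>k. brk y n < enat k \<and> k < m \<longrightarrow> y k = y (k - 1)))"
  (is "?L \<longleftrightarrow> ?R")
proof
  let ?S = "{enat k | k. brk y n < enat k \<and> y k \<noteq> y (k - 1)}"
  assume L: ?L
  have LI: "Inf ?S = enat m" using L by (simp only: brk_Suc_def)
  have ne: "?S \<noteq> {}"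
  proof
    assume "?S = {}"
    then have "Inf ?S = \<infinity>" unfolding Inf_enat_def by (simp only: \<open>?S = {}\<close> if_True)
    with LI show False by simp
  qed
  obtain s0 where "s0 \<in> ?S" using ne by blast
  then have "(LEAST x. x \<in> ?S) \<in> ?S" by (rule LeastI)
  then have "Inf ?S \<in> ?S" unfolding Inf_enat_def by (simp only: ne if_False)
  then have mem: "enat m \<in> ?S" using LI by simp
  have low: "enat m \<le> s" if "s \<in> ?S" for s
  proof -
    have "Inf ?S \<le> s" using that by (rule Inf_lower)
    then show ?thesis using LI by simp
  qed
  show ?R
  proof (intro conjI allI impI)
    show "brk y n < enat m" "y m \<noteq> y (m - 1)" using mem by auto
    fix k assume k: "brk y n < enat k \<and> k < m"
    show "y k = y (k - 1)"
    proof (rule ccontr)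
      assume "y k \<noteq> y (k - 1)"
      then have "enat k \<in> ?S" using k by blast
      then have "enat m \<le> enat k" by (rule low)
      with k show False by simp
    qed
  qed
next
  let ?S = "{enat k | k. brk y n < enat k \<and> y k \<noteq> y (k - 1)}"
  assume R: ?R
  have "enat m \<in> ?S" using R by blast
  then have "Inf ?S \<le> enat m" by (rule Inf_lower)
  moreover have "enat m \<le> Inf ?S"
  proof (rule Inf_greatest)
    fix s assume "s \<in> ?S"
    then obtain k where k: "s = enat k" "brk y n < enat k" "y k \<noteq> y (k - 1)" by blast
    then have "\<not> k < m" using R by blast
    then show "enat m \<le> s" using k by simp
  qed
  ultimately show ?L unfolding brk_Suc_def by (rule antisym)
qed

lemma brk_Suc_inf:
  assumes "brk y (Suc n) = \<infinity>" "brk y n = enat m0" "m0 < k"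
  shows "y k = y (k - 1)"
proof (rule ccontr)
  assume "y k \<noteq> y (k - 1)"
  then have "enat k \<in> {enat k | k. brk y n < enat k \<and> y k \<noteq> y (k - 1)}"
    using assms(2,3) by simp
  then have "brk y (Suc n) \<le> enat k" unfolding brk_Suc_def by (rule Inf_lower)
  with assms(1) show False by simp
qed

lemma brk_const:
  assumes "brk y n = enat m0" "m0 \<le> k" "enat k < brk y (Suc n)"
  shows "y k = y m0"
  using assms(2,3)
proof (induction k)
  case 0 then show ?case by simp
next
  case (Suc k)
  show ?case
  proof (cases "m0 = Suc k")
    case True then show ?thesis by simp
  next
    case False
    then have "m0 \<le> k" using Suc.prems by simp
    have "y (Suc k) = y k"
    proof (rule ccontr)
      assume "y (Suc k) \<noteq> y k"
      then have "brk y (Suc n) \<le> enat (Suc k)" unfolding brk_Suc_def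
        using assms(1) \<open>m0 \<le> k\<close> by (intro Inf_lower) auto
      with Suc.prems show False by simp
    qed
    moreover have "enat k < brk y (Suc n)"
      by (rule order.strict_trans[OF _ Suc.prems(2)]) simp
    moreover have "y k = y m0" using Suc.IH \<open>m0 \<le> k\<close> calculation(2) by blast
    ultimately show ?thesis by simp
  qed
qed

lemma brk_Suc_prev:
  assumes "brk y (Suc n) = enat m"
  obtains m0 where "brk y n = enat m0" "m0 < m"
  using assms unfolding brk_Suc_enat by (cases "brk y n") auto

lemma brk_det:
  assumes "brk y n = enat m" "\<forall>i\<le>m. z i = y i"
  shows "brk z n = enat m"
  using assms
proof (induction n arbitrary: m)
  case 0 then show ?case by (simp add: zero_enat_def)
next
  case (Suc n)
  obtain m0 where m0: "brk y n = enat m0" "m0 < m" using Suc.prems(1) by (rule brk_Suc_prev)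
  have z0: "brk z n = enat m0" using Suc.IH[OF m0(1)] Suc.prems(2) m0(2) by simp
  have yc: "y m \<noteq> y (m - 1)" "\<And>k. m0 < k \<Longrightarrow> k < m \<Longrightarrow> y k = y (k - 1)"
    using Suc.prems(1) m0(1) unfolding brk_Suc_enat by auto
  show ?case unfolding brk_Suc_enat z0
  proof (intro conjI allI impI)
    show "enat m0 < enat m" using m0 by simp
    show "z m \<noteq> z (m - 1)" using yc(1) Suc.prems(2) by simp
    fix k assume "enat m0 < enat k \<and> k < m"
    then have "k \<le> m" "k - 1 \<le> m" by auto
    then show "z k = z (k - 1)" using yc(2)[of k] Suc.prems(2) \<open>enat m0 < enat k \<and> k < m\<close> by simp
  qed
qed

lemma brk_break:
  assumes "brk y n = enat m"
  shows "(n = 0 \<and> m = 0) \<or> (0 < n \<and> 0 < m \<and> y (m - 1) \<noteq> y m)"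
proof (cases n)
  case 0 then show ?thesis using assms by (simp add: zero_enat_def)
next
  case (Suc n')
  then have "brk y (Suc n') = enat m" using assms by simp
  then show ?thesis unfolding brk_Suc_enat using Suc
    by (cases "brk y n'") auto
qed

lemma brk_sum: "brk y n = (\<Sum>i\<le>n. soj y i)"
proof (induction n)
  case 0 then show ?case by (simp add: soj_def)
next
  case (Suc n)
  have "brk y (Suc n) = brk y n + (brk y (Suc n) - brk y n)"
  proof (cases "brk y n")
    case (enat a)
    then show ?thesis using brk_mono_Suc[of y n]
      by (cases "brk y (Suc n)") auto
  next
    case infinity
    then show ?thesis using brk_inf_Suc[of y n] by simp
  qed
  then show ?case using Suc by (simp add: soj_def)
qed

lemma past_0: "past x 0 = [x 0, N]"
  by (simp add: past_def)

lemma past_rev: "past x i = rev (map x [0..<Suc i]) @ [N]"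
proof -
  have "map (\<lambda>j. x (i - j)) [0..<Suc i] = rev (map x [0..<Suc i])"
    by (rule nth_equalityI) (simp_all add: rev_nth del: upt_Suc)
  then show ?thesis by (simp add: past_def)
qed

lemma past_Suc: "past x (Suc i) = x (Suc i) # past x i"
  by (simp add: past_rev)

definition pastrest :: "(nat \<Rightarrow> letter) \<Rightarrow> nat \<Rightarrow> letter list" where
  "pastrest y m = (if m = 0 then [N] else past y (m - 1))"

lemma pastrest_cons: "\<exists>rs. pastrest y m = (if m = 0 then N else y (m - 1)) # rs"
proof (cases m)
  case 0 then show ?thesis by (simp add: pastrest_def)
next
  case (Suc m')
  then show ?thesis by (cases m') (auto simp: pastrest_def past_0 past_Suc)
qed

lemma past_run:
  assumes "\<And>i. m \<le> i \<Longrightarrow> i \<le> j \<Longrightarrow> y i = \<alpha>" "m \<le> j"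
  shows "past y j = replicate (Suc j - m) \<alpha> @ pastrest y m"
  using assms
proof (induction j)
  case 0 then show ?case by (simp add: past_0 pastrest_def)
next
  case (Suc j)
  have ys: "y (Suc j) = \<alpha>" using Suc.prems(1)[of "Suc j"] Suc.prems(2) by blast
  show ?case
  proof (cases "m = Suc j")
    case True
    then have "pastrest y m = past y j" by (simp add: pastrest_def)
    then show ?thesis using True ys by (simp only: past_Suc) simp
  next
    case False
    then have mj: "m \<le> j" using Suc.prems(2) by simp
    have "past y j = replicate (Suc j - m) \<alpha> @ pastrest y m"
      using Suc.IH[OF _ mj] Suc.prems(1) by simp
    moreover have "Suc (Suc j) - m = Suc (Suc j - m)" using mj by simp
    ultimately show ?thesis using ys by (simp only: past_Suc replicate_Suc append_Cons)
  qed
qed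

lemma ctx_run:
  assumes "b \<noteq> \<alpha>"
  shows "ctx (replicate (Suc r) \<alpha> @ b # rs) = (\<alpha>, Suc r, b)"
  using assms by (simp add: ctx_def takeWhile_append dropWhile_append)

lemma find_run:
  assumes "b \<noteq> \<alpha>"
  shows "find (\<lambda>c. c \<noteq> \<alpha>) (replicate r \<alpha> @ b # rs) = Some b"
  using assms by (induction r) auto




lemma measurable_countable_fun2:
  fixes f :: "'a \<Rightarrow> 'b::countable" and g :: "'a \<Rightarrow> 'c::countable"
  assumes "f \<in> M \<rightarrow>\<^sub>M count_space UNIV" "g \<in> M \<rightarrow>\<^sub>M count_space UNIV"
  shows "(\<lambda>\<omega>. h (f \<omega>) (g \<omega>)) \<in> M \<rightarrow>\<^sub>M count_space UNIV"
proof -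
  have "(\<lambda>\<omega>. (f \<omega>, g \<omega>)) \<in> M \<rightarrow>\<^sub>M count_space UNIV \<Otimes>\<^sub>M count_space UNIV"
    using assms by (rule measurable_Pair)
  also have "count_space UNIV \<Otimes>\<^sub>M count_space UNIV = count_space (UNIV :: ('b \<times> 'c) set)"
    by (simp add: pair_measure_countable)
  finally have p: "(\<lambda>\<omega>. (f \<omega>, g \<omega>)) \<in> M \<rightarrow>\<^sub>M count_space (UNIV :: ('b \<times> 'c) set)" .
  have "(\<lambda>p. h (fst p) (snd p)) \<in> count_space (UNIV :: ('b \<times> 'c) set) \<rightarrow>\<^sub>M count_space UNIV"
    by simp
  from measurable_comp[OF p this] show ?thesis by (simp add: comp_def)
qed

lemma measurable_countable_pred:
  fixes f :: "'a \<Rightarrow> 'b::countable"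
  assumes "f \<in> M \<rightarrow>\<^sub>M count_space UNIV"
  shows "{\<omega> \<in> space M. P (f \<omega>)} \<in> sets M"
proof -
  have "f -` {v. P v} \<inter> space M \<in> sets M" using assms by (rule measurable_sets) simp
  moreover have "f -` {v. P v} \<inter> space M = {\<omega> \<in> space M. P (f \<omega>)}" by auto
  ultimately show ?thesis by simp
qed

lemma measurable_countable_points:
  fixes g :: "'a \<Rightarrow> 'b::countable"
  assumes "\<And>a. {\<omega> \<in> space M. g \<omega> = a} \<in> sets M"
  shows "g \<in> M \<rightarrow>\<^sub>M count_space UNIV"
  unfolding measurable_count_space_eq2_countable
proof (intro conjI ballI)
  fix a
  have "g -` {a} \<inter> space M = {\<omega> \<in> space M. g \<omega> = a}" by auto
  then show "g -` {a} \<inter> space M \<in> sets M" using assms by simp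
qed simp

locale vsetup = prob_space M for M :: "'a measure" +
  fixes X :: "nat \<Rightarrow> 'a \<Rightarrow> letter" and q :: "ctxw \<Rightarrow> letter pmf"
  assumes q_lim: "\<And>\<alpha> \<beta>. \<alpha> \<noteq> \<beta> \<Longrightarrow>
                  (\<lambda>n. \<Prod>k\<in>{1..n}. pmf (q (\<alpha>, k, \<beta>)) \<alpha>) \<longlonglongrightarrow> 0"
    and X_meas: "\<And>n. X n \<in> M \<rightarrow>\<^sub>M count_space UNIV"
    and X0: "\<And>\<omega>. \<omega> \<in> space M \<Longrightarrow> X 0 \<omega> = E"
    and vlmc: "\<And>n x. x 0 = E \<Longrightarrow>
       measure M {\<omega> \<in> space M. \<forall>i\<le>n. X i \<omega> = x i}
         = (\<Prod>i<n. pmf (q (ctx (past x i))) (x (Suc i)))"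
begin

definition xp :: "'a \<Rightarrow> nat \<Rightarrow> letter" where "xp \<omega> = (\<lambda>i. X i \<omega>)"

lemma xp0: "\<omega> \<in> space M \<Longrightarrow> xp \<omega> 0 = E"
  by (simp add: xp_def X0)

lemma meas_list: "(\<lambda>\<omega>. map (\<lambda>i. X i \<omega>) [0..<m]) \<in> M \<rightarrow>\<^sub>M count_space UNIV"
proof (induction m)
  case 0 then show ?case by simp
next
  case (Suc m)
  have "(\<lambda>\<omega>. (\<lambda>l a. l @ [a]) (map (\<lambda>i. X i \<omega>) [0..<m]) (X m \<omega>)) \<in> M \<rightarrow>\<^sub>M count_space UNIV"
    by (rule measurable_countable_fun2[OF Suc X_meas])
  then show ?case by simp
qed

lemma cyl_sets: "{\<omega> \<in> space M. \<forall>i\<le>m. X i \<omega> = y i} \<in> sets M"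
proof -
  have "{\<omega> \<in> space M. \<forall>i\<le>m. X i \<omega> = y i}
      = {\<omega> \<in> space M. (\<lambda>l. l = map y [0..<Suc m]) (map (\<lambda>i. X i \<omega>) [0..<Suc m])}"
    by (auto simp del: upt_Suc simp: map_eq_conv less_Suc_eq_le)
  also have "\<dots> \<in> sets M" by (rule measurable_countable_pred[OF meas_list])
  finally show ?thesis .
qed

lemma meas_brk: "(\<lambda>\<omega>. brk (xp \<omega>) n) \<in> M \<rightarrow>\<^sub>M count_space UNIV"
proof (induction n)
  case 0 then show ?case by (simp add: zero_enat_def)
next
  case (Suc n)
  have fin: "{\<omega> \<in> space M. brk (xp \<omega>) (Suc n) = enat m} \<in> sets M" for m
  proof -
    let ?Q = "\<lambda>b (l :: letter list). b < enat m \<and> l ! m \<noteq> l ! (m - 1) \<and>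
                 (\<forall>k. b < enat k \<and> k < m \<longrightarrow> l ! k = l ! (k - 1))"
    have "{\<omega> \<in> space M. brk (xp \<omega>) (Suc n) = enat m}
        = {\<omega> \<in> space M. (\<lambda>p. ?Q (fst p) (snd p)) (brk (xp \<omega>) n, map (\<lambda>i. X i \<omega>) [0..<Suc m])}"
      unfolding brk_Suc_enat by (auto simp del: upt_Suc simp: xp_def)
    also have "\<dots> \<in> sets M"
      by (rule measurable_countable_pred[OF measurable_countable_fun2[OF Suc meas_list, of Pair]])
    finally show ?thesis .
  qed
  show ?case
  proof (rule measurable_countable_points)
    fix a :: enat
    show "{\<omega> \<in> space M. brk (xp \<omega>) (Suc n) = a} \<in> sets M"
    proof (cases a)
      case (enat m) then show ?thesis using fin by simp
    next
      case infinity
      have "{\<omega> \<in> space M. brk (xp \<omega>) (Suc n) = a} = {\<omega> \<in> space M. \<forall>m. \<not> brk (xp \<omega>) (Suc n) = enat m}"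
        using infinity by (auto; metis enat.exhaust)
      also have "\<dots> \<in> sets M"
        by (intro sets.sets_Collect_countable_All sets.sets_Collect_neg fin)
      finally show ?thesis .
    qed
  qed
qed

lemma meas_at_time:
  assumes "T \<in> M \<rightarrow>\<^sub>M count_space UNIV"
  shows "(\<lambda>\<omega>. at_time (xp \<omega>) (T \<omega>)) \<in> M \<rightarrow>\<^sub>M count_space UNIV"
proof -
  have "(\<lambda>\<omega>. (\<lambda>t \<omega>. case t of enat k \<Rightarrow> X k \<omega> | \<infinity> \<Rightarrow> undefined) (T \<omega>) \<omega>) \<in> M \<rightarrow>\<^sub>M count_space UNIV"
  proof (rule measurable_compose_countable[OF _ assms])
    fix t :: enat
    show "(\<lambda>\<omega>. case t of enat k \<Rightarrow> X k \<omega> | \<infinity> \<Rightarrow> undefined) \<in> M \<rightarrow>\<^sub>M count_space UNIV"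
      by (cases t) (simp_all add: X_meas)
  qed
  then show ?thesis by (simp add: at_time_def xp_def)
qed

lemma meas_bendJ: "(\<lambda>\<omega>. bendJ (xp \<omega>) n) \<in> M \<rightarrow>\<^sub>M count_space UNIV"
proof (cases n)
  case 0 then show ?thesis by (simp add: bendJ_def)
next
  case (Suc n')
  have "(\<lambda>\<omega>. Pair (at_time (xp \<omega>) (brk (xp \<omega>) n')) (at_time (xp \<omega>) (brk (xp \<omega>) n))) \<in> M \<rightarrow>\<^sub>M count_space UNIV"
    by (rule measurable_countable_fun2[OF meas_at_time[OF meas_brk] meas_at_time[OF meas_brk]])
  then show ?thesis using Suc by (simp add: bendJ_def)
qed

lemma meas_soj: "(\<lambda>\<omega>. soj (xp \<omega>) n) \<in> M \<rightarrow>\<^sub>M count_space UNIV"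
proof -
  have "(\<lambda>\<omega>. (\<lambda>a b. if n = 0 then 0 else a - b) (brk (xp \<omega>) n) (brk (xp \<omega>) (n - 1))) \<in> M \<rightarrow>\<^sub>M count_space UNIV"
    by (rule measurable_countable_fun2[OF meas_brk meas_brk])
  then show ?thesis by (simp add: soj_def)
qed

end



lemma brk_mono: "i \<le> n \<Longrightarrow> brk y i \<le> brk y n"
proof (induction n)
  case 0 then show ?case by simp
next
  case (Suc n)
  show ?case
  proof (cases "i = Suc n")
    case True then show ?thesis by simp
  next
    case False
    then have "i \<le> n" using Suc.prems by simp
    then have "brk y i \<le> brk y n" by (rule Suc.IH)
    also have "\<dots> \<le> brk y (Suc n)" by (rule brk_mono_Suc)
    finally show ?thesis .
  qed
qed

lemma brk_fin_le:
  assumes "brk y n = enat m" "i \<le> n"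
  obtains m' where "brk y i = enat m'" "m' \<le> m"
proof -
  have le: "brk y i \<le> enat m" using brk_mono[OF assms(2), of y] assms(1) by simp
  then obtain m' where "brk y i = enat m'" by (cases "brk y i") auto
  moreover have "m' \<le> m" using le calculation by simp
  ultimately show ?thesis using that by blast
qed

lemma bendJ_Suc:
  assumes "brk y n = enat m0" "brk y (Suc n) = enat m"
  shows "bendJ y (Suc n) = (y m0, y m)"
  using assms by (simp add: bendJ_def at_time_def)

definition prev :: "(nat \<Rightarrow> letter) \<Rightarrow> nat \<Rightarrow> letter" where
  "prev y m = (if m = 0 then N else y (m - 1))"

lemma bendJ_at:
  assumes "y 0 = E" "brk y n = enat m"
  shows "bendJ y n = (prev y m, y m)"
proof (cases n)
  case 0
  then have "m = 0" using assms by (simp add: zero_enat_def)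
  then show ?thesis using 0 assms by (simp add: bendJ_def prev_def)
next
  case (Suc n')
  obtain m0 where m0: "brk y n' = enat m0" "m0 < m" using assms(2) Suc by (metis brk_Suc_prev)
  have bs: "brk y (Suc n') = enat m" using assms Suc by simp
  have "y (m - 1) = y m0" using brk_const[OF m0(1), of "m - 1"] m0(2) bs by simp
  then show ?thesis using bendJ_Suc[OF m0(1) bs] Suc m0 by (simp add: prev_def)
qed

lemma prev_neq:
  assumes "y 0 = E" "brk y n = enat m"
  shows "prev y m \<noteq> y m"
  using brk_break[OF assms(2)] assms(1) by (auto simp: prev_def)

lemma pastrest_prev: "\<exists>rs. pastrest y m = prev y m # rs"
  using pastrest_cons[of y m] by (simp add: prev_def)

lemma bendJ_in:
  assumes "y 0 = E" "brk y n = enat m"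
  shows "bendJ y n \<in> bends"
  using bendJ_at[OF assms] prev_neq[OF assms] by (simp add: bends_def)

lemma brk_Suc_soj: "brk y (Suc n) = brk y n + soj y (Suc n)"
  by (simp add: brk_sum)

lemma brk_fin_soj: "(\<forall>i\<le>n. soj y i \<noteq> \<infinity>) \<Longrightarrow> brk y n \<noteq> \<infinity>"
proof (induction n)
  case 0 then show ?case by simp
next
  case (Suc n)
  then have "brk y n \<noteq> \<infinity>" "soj y (Suc n) \<noteq> \<infinity>" by auto
  then obtain a b where "brk y n = enat a" "soj y (Suc n) = enat b" by auto
  then show ?case by (simp add: brk_Suc_soj)
qed

lemma brk_eq_from_soj:
  assumes "\<forall>i\<le>n. soj z i = soj y i" "i \<le> n"
  shows "brk z i = brk y i"
  using assms by (simp add: brk_sum)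

lemma soj_eq_from_brk:
  assumes "\<forall>i\<le>n. brk z i = brk y i" "i \<le> n"
  shows "soj z i = soj y i"
  using assms by (simp add: soj_def)

lemma hist_cyl_brk:
  assumes "y 0 = E" "z 0 = E" "brk y n = enat m"
  shows "(\<forall>i\<le>m. z i = y i) \<longleftrightarrow> (\<forall>i\<le>n. bendJ z i = bendJ y i \<and> brk z i = brk y i)"
proof
  assume agr: "\<forall>i\<le>m. z i = y i"
  show "\<forall>i\<le>n. bendJ z i = bendJ y i \<and> brk z i = brk y i"
  proof (intro allI impI)
    fix i assume i: "i \<le> n"
    obtain mi where mi: "brk y i = enat mi" "mi \<le> m" by (rule brk_fin_le[OF assms(3) i])
    have bz: "brk z i = enat mi" using brk_det[OF mi(1)] agr mi(2) by simp
    have "bendJ z i = bendJ y i"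
      using bendJ_at[OF assms(1) mi(1)] bendJ_at[OF assms(2) bz] agr mi(2)
      by (simp add: prev_def)
    then show "bendJ z i = bendJ y i \<and> brk z i = brk y i" using bz mi by simp
  qed
next
  assume H: "\<forall>i\<le>n. bendJ z i = bendJ y i \<and> brk z i = brk y i"
  show "\<forall>i\<le>m. z i = y i"
    using assms(3) H
  proof (induction n arbitrary: m)
    case 0
    then have "m = 0" by (simp add: zero_enat_def)
    then show ?case using assms(1,2) by simp
  next
    case (Suc n)
    obtain m0 where m0: "brk y n = enat m0" "m0 < m" using Suc.prems(1) by (rule brk_Suc_prev)
    have IH: "\<forall>i\<le>m0. z i = y i" using Suc.IH[OF m0(1)] Suc.prems(2) by simp
    have bz: "brk z n = enat m0" "brk z (Suc n) = enat m" using Suc.prems m0 by auto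
    have Jz: "bendJ z (Suc n) = bendJ y (Suc n)" using Suc.prems(2) by blast
    have zm: "z m = y m" using Jz bendJ_Suc[OF bz] bendJ_Suc[OF m0(1) Suc.prems(1)] by simp
    show ?case
    proof (intro allI impI)
      fix i assume "i \<le> m"
      show "z i = y i"
      proof (cases "i \<le> m0")
        case True then show ?thesis using IH by simp
      next
        case False
        show ?thesis
        proof (cases "i = m")
          case True then show ?thesis using zm by simp
        next
          case False
          then have "m0 \<le> i" "enat i < enat m" using \<open>i \<le> m\<close> \<open>\<not> i \<le> m0\<close> by auto
          have "z i = z m0"
            by (rule brk_const[OF bz(1) \<open>m0 \<le> i\<close>]) (simp only: bz(2) \<open>enat i < enat m\<close>)
          moreover have "y i = y m0"
            by (rule brk_const[OF m0(1) \<open>m0 \<le> i\<close>]) (simp only: Suc.prems(1) \<open>enat i < enat m\<close>)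
          ultimately show ?thesis using IH \<open>m0 \<le> i\<close> by simp
        qed
      qed
    qed
  qed
qed

lemma hist_cyl_soj:
  assumes "y 0 = E" "z 0 = E" "brk y n = enat m"
  shows "(\<forall>i\<le>m. z i = y i) \<longleftrightarrow> (\<forall>i\<le>n. bendJ z i = bendJ y i \<and> soj z i = soj y i)"
proof -
  have "(\<forall>i\<le>n. bendJ z i = bendJ y i \<and> soj z i = soj y i)
     \<longleftrightarrow> (\<forall>i\<le>n. bendJ z i = bendJ y i \<and> brk z i = brk y i)"
  proof
    assume H: "\<forall>i\<le>n. bendJ z i = bendJ y i \<and> soj z i = soj y i"
    then have S: "\<forall>i\<le>n. soj z i = soj y i" by simp
    show "\<forall>i\<le>n. bendJ z i = bendJ y i \<and> brk z i = brk y i"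
      using H brk_eq_from_soj[OF S] by simp
  next
    assume H: "\<forall>i\<le>n. bendJ z i = bendJ y i \<and> brk z i = brk y i"
    then have S: "\<forall>i\<le>n. brk z i = brk y i" by simp
    show "\<forall>i\<le>n. bendJ z i = bendJ y i \<and> soj z i = soj y i"
      using H soj_eq_from_brk[OF S] by simp
  qed
  then show ?thesis using hist_cyl_brk[of y z n m, OF assms] by simp
qed

lemma semi_markov_path:
  assumes "y 0 = E"
  shows "semi_markov_assoc (bendJ y) (soj y) (bendZ y)"
  unfolding semi_markov_assoc_def
proof (intro conjI allI impI)
  show "soj y 0 = 0" by (simp add: soj_def)
  fix n j
  assume hj: "sum (soj y) {..n} \<le> enat j \<and> enat j < sum (soj y) {..Suc n}"
  have h: "brk y n \<le> enat j" "enat j < brk y (Suc n)"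
    using hj unfolding brk_sum[of y n, symmetric] brk_sum[of y "Suc n", symmetric] by simp_all
  then obtain m where m: "brk y n = enat m" "m \<le> j" by (cases "brk y n") auto
  have const: "y i = y m" if "m \<le> i" "i \<le> j" for i
  proof (rule brk_const[OF m(1) that(1)])
    show "enat i < brk y (Suc n)" by (rule le_less_trans[OF _ h(2)]) (simp add: that(2))
  qed
  have yj: "y j = y m" using m(2) by (intro const) simp_all
  show "bendZ y j = bendJ y n"
  proof (cases "j = 0")
    case True
    then have "m = 0" using m by simp
    then have "n = 0" using brk_break[OF m(1)] by simp
    then show ?thesis using True by (simp add: bendZ_def bendJ_def)
  next
    case False
    have p: "past y (j - 1) = replicate (j - m) (y m) @ pastrest y m"
    proof (cases "j = m")
      case True
      then show ?thesis using False by (simp add: pastrest_def)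
    next
      case False
      have "past y (j - 1) = replicate (Suc (j - 1) - m) (y m) @ pastrest y m"
      proof (rule past_run)
        show "m \<le> j - 1" using False m(2) by simp
        fix i assume "m \<le> i" "i \<le> j - 1"
        then show "y i = y m" using m(2) by (intro const) simp_all
      qed
      moreover have "Suc (j - 1) - m = j - m" using \<open>j \<noteq> 0\<close> by simp
      ultimately show ?thesis by simp
    qed
    obtain rs where rs: "pastrest y m = prev y m # rs" using pastrest_prev by blast
    have "find (\<lambda>c. c \<noteq> y m) (replicate (j - m) (y m) @ prev y m # rs) = Some (prev y m)"
      by (rule find_run[OF prev_neq[OF assms m(1)]])
    then have "find (\<lambda>c. c \<noteq> y j) (past y (j - 1)) = Some (prev y m)"
      unfolding p rs yj .
    then show ?thesis using False bendJ_at[OF assms m(1)] yj by (simp add: bendZ_def)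
  qed
qed




lemma prod_shift1: "(\<Prod>j\<in>{1..<Suc k}. f j) = (\<Prod>j<k. (f (Suc j) :: real))"
proof (induction k)
  case 0 then show ?case by simp
next
  case (Suc k)
  have "(\<Prod>j\<in>{1..<Suc (Suc k)}. f j) = (\<Prod>j\<in>{1..<Suc k}. f j) * f (Suc k)"
    by (rule prod.atLeastLessThan_Suc) simp
  then show ?case using Suc by simp
qed

lemma prod_shift2: "(\<Prod>j\<in>{1..K}. f j) = (\<Prod>j<K. (f (Suc j) :: real))"
  using prod_shift1[of f K] by (simp add: atLeastLessThanSuc_atLeastAtMost)

lemma const_after:
  fixes z :: "nat \<Rightarrow> 'b" and m i :: nat
  assumes "\<And>k. m < k \<Longrightarrow> z k = z (k - 1)"
  shows "m \<le> i \<Longrightarrow> z i = z m"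
proof (induction i)
  case 0 then show ?case by simp
next
  case (Suc i)
  show ?case
  proof (cases "m = Suc i")
    case True then show ?thesis by simp
  next
    case False
    then have "m \<le> i" using Suc.prems by simp
    then have "z i = z m" by (rule Suc.IH)
    moreover have "z (Suc i) = z i" using assms(1)[of "Suc i"] \<open>m \<le> i\<close> by simp
    ultimately show ?thesis by simp
  qed
qed

lemma past_agree:
  assumes "\<forall>i'\<le>m. y' i' = y i'" "i \<le> m"
  shows "past y' i = past y i"
  unfolding past_rev using assms by (simp del: upt_Suc add: map_eq_conv)

lemma pastrest_agree:
  assumes "\<forall>i'\<le>m. y' i' = y i'"
  shows "pastrest y' m = pastrest y m"
  using past_agree[OF assms, of "m - 1"] by (simp add: pastrest_def)

context vsetup
begin

definition cyl :: "(nat \<Rightarrow> letter) \<Rightarrow> nat \<Rightarrow> 'a set" where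
  "cyl y m = {\<omega> \<in> space M. \<forall>i\<le>m. X i \<omega> = y i}"

lemma prod_ext:
  assumes y0: "y 0 = E" and bm: "brk y n = enat m" and agr: "\<forall>i\<le>m. y' i = y i"
    and run: "\<And>i. m \<le> i \<Longrightarrow> i < m + k \<Longrightarrow> y' i = y m"
  shows "(\<Prod>i<m + k. pmf (q (ctx (past y' i))) (y' (Suc i)))
       = (\<Prod>i<m. pmf (q (ctx (past y i))) (y (Suc i)))
         * (\<Prod>j<k. pmf (q (y m, Suc j, prev y m)) (y' (m + Suc j)))"
  using run
proof (induction k)
  case 0
  have "(\<Prod>i<m. pmf (q (ctx (past y' i))) (y' (Suc i))) = (\<Prod>i<m. pmf (q (ctx (past y i))) (y (Suc i)))"
  proof (rule prod.cong)
    fix i assume "i \<in> {..<m}"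
    then have "i \<le> m" "Suc i \<le> m" by auto
    then show "pmf (q (ctx (past y' i))) (y' (Suc i)) = pmf (q (ctx (past y i))) (y (Suc i))"
      using past_agree[OF agr] agr by simp
  qed simp
  then show ?case by simp
next
  case (Suc k)
  have IH: "(\<Prod>i<m + k. pmf (q (ctx (past y' i))) (y' (Suc i)))
       = (\<Prod>i<m. pmf (q (ctx (past y i))) (y (Suc i)))
         * (\<Prod>j<k. pmf (q (y m, Suc j, prev y m)) (y' (m + Suc j)))"
    using Suc.prems by (intro Suc.IH) simp_all
  have "past y' (m + k) = replicate (Suc (m + k) - m) (y m) @ pastrest y' m"
    by (rule past_run) (use Suc.prems in auto)
  moreover have "Suc (m + k) - m = Suc k" by simp
  moreover obtain rs where "pastrest y m = prev y m # rs" using pastrest_prev by blast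
  ultimately have "past y' (m + k) = replicate (Suc k) (y m) @ prev y m # rs"
    using pastrest_agree[OF agr] by simp
  then have c: "ctx (past y' (m + k)) = (y m, Suc k, prev y m)"
    using ctx_run[OF prev_neq[OF y0 bm]] by simp
  have "(\<Prod>i<m + Suc k. pmf (q (ctx (past y' i))) (y' (Suc i)))
      = (\<Prod>i<m + k. pmf (q (ctx (past y' i))) (y' (Suc i))) * pmf (q (ctx (past y' (m + k)))) (y' (Suc (m + k)))"
    by simp
  also have "\<dots> = (\<Prod>i<m. pmf (q (ctx (past y i))) (y (Suc i)))
         * (\<Prod>j<k. pmf (q (y m, Suc j, prev y m)) (y' (m + Suc j)))
         * pmf (q (y m, Suc k, prev y m)) (y' (m + Suc k))"
    using IH c by simp
  finally show ?case by (simp add: mult.assoc)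
qed

lemma measure_ext:
  assumes y0: "y 0 = E" and bm: "brk y n = enat m" and agr: "\<forall>i\<le>m. y' i = y i"
    and run: "\<And>i. m \<le> i \<Longrightarrow> i < m + k \<Longrightarrow> y' i = y m"
  shows "measure M (cyl y' (m + k))
       = measure M (cyl y m) * (\<Prod>j<k. pmf (q (y m, Suc j, prev y m)) (y' (m + Suc j)))"
proof -
  have y'0: "y' 0 = E" using agr y0 by auto
  show ?thesis
    unfolding cyl_def vlmc[where x=y', OF y'0] vlmc[where x=y, OF y0] using prod_ext[OF y0 bm agr run] by simp
qed

end



lemma nth_pref: "i \<le> m \<Longrightarrow> map f [0..<Suc m] ! i = f i"
  by (simp del: upt_Suc add: nth_map_upt)

lemma soj_iff:
  assumes "brk z n = enat m"
  shows "soj z (Suc n) = enat k \<longleftrightarrow> brk z (Suc n) = enat (m + k)"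
proof (cases "brk z (Suc n)")
  case (enat b')
  then have "m \<le> b'" using brk_mono_Suc[of z n] assms by simp
  then show ?thesis using enat assms by (auto simp: soj_def)
next
  case infinity
  then show ?thesis using assms by (simp add: soj_def)
qed

context vsetup
begin

lemma kernel_meas:
  assumes y0: "y 0 = E" and bm: "brk y n = enat m"
  shows "measure M {\<omega> \<in> space M. (\<forall>i\<le>m. X i \<omega> = y i) \<and> brk (xp \<omega>) (Suc n) = enat (m + k)
                         \<and> bendJ (xp \<omega>) (Suc n) = b}
       = sm_kernel q (bendJ y n) b k * measure M (cyl y m)"
proof -
  define \<alpha> where "\<alpha> = y m"
  define \<beta> where "\<beta> = prev y m"
  have Jy: "bendJ y n = (\<beta>, \<alpha>)" using bendJ_at[OF y0 bm] by (simp add: \<alpha>_def \<beta>_def)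
  have ba: "\<beta> \<noteq> \<alpha>" using prev_neq[OF y0 bm] by (simp add: \<alpha>_def \<beta>_def)
  let ?A = "{\<omega> \<in> space M. (\<forall>i\<le>m. X i \<omega> = y i) \<and> brk (xp \<omega>) (Suc n) = enat (m + k)
                         \<and> bendJ (xp \<omega>) (Suc n) = b}"
  have facts: "brk (xp \<omega>) n = enat m \<and> 0 < k \<and> b = (\<alpha>, xp \<omega> (m + k)) \<and> xp \<omega> (m + k) \<noteq> \<alpha>
      \<and> (\<forall>i. m \<le> i \<longrightarrow> i < m + k \<longrightarrow> xp \<omega> i = \<alpha>)" if w: "\<omega> \<in> ?A" for \<omega>
  proof -
    let ?z = "xp \<omega>"
    have agr: "\<forall>i\<le>m. ?z i = y i" using w by (simp add: xp_def)
    have bz: "brk ?z n = enat m" using brk_det[OF bm agr] .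
    have bz1: "brk ?z (Suc n) = enat (m + k)" using w by simp
    have c: "m < m + k" "?z (m + k) \<noteq> ?z (m + k - 1)" using bz1 unfolding brk_Suc_enat bz by auto
    have run: "?z i = ?z m" if "m \<le> i" "i < m + k" for i
      using brk_const[OF bz that(1)] bz1 that(2) by simp
    have zm: "?z m = \<alpha>" using agr by (simp add: \<alpha>_def)
    have zk: "?z (m + k - 1) = \<alpha>" using run[of "m + k - 1"] c(1) zm by simp
    have bb: "b = (\<alpha>, ?z (m + k))" using w bendJ_Suc[OF bz bz1] zm by simp
    have rr: "\<forall>i. m \<le> i \<longrightarrow> i < m + k \<longrightarrow> ?z i = \<alpha>"
    proof (intro allI impI)
      fix i assume i: "m \<le> i" "i < m + k"
      show "?z i = \<alpha>" using run[OF i] zm by simp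
    qed
    have "0 < k" using c(1) by simp
    moreover have "?z (m + k) \<noteq> \<alpha>" using c(2) zk by simp
    ultimately show ?thesis using bz bb rr by blast
  qed
  show ?thesis
  proof (cases "0 < k \<and> fst b = \<alpha> \<and> snd b \<noteq> \<alpha>")
    case False
    have e: "?A = {}"
    proof (rule ccontr)
      assume "?A \<noteq> {}"
      then obtain \<omega> where "\<omega> \<in> ?A" by blast
      from facts[OF this] False show False by auto
    qed
    have k0: "sm_kernel q (bendJ y n) b k = 0"
      using False Jy by (cases b) (auto simp: sm_kernel_def)
    show ?thesis by (simp only: e k0 measure_empty mult_zero_left)
  next
    case True
    then obtain \<gamma> k' where b: "b = (\<alpha>, \<gamma>)" "\<gamma> \<noteq> \<alpha>" "k = Suc k'"
      by (cases b; cases k) auto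
    define y' where "y' = (\<lambda>i. if i \<le> m then y i else if i < m + k then \<alpha> else \<gamma>)"
    have agr': "\<forall>i\<le>m. y' i = y i" by (simp add: y'_def)
    have run': "y' i = y m" if "m \<le> i" "i < m + k" for i using that by (simp add: y'_def \<alpha>_def)
    have "?A = cyl y' (m + k)"
    proof (intro equalityI subsetI)
      fix \<omega> assume w: "\<omega> \<in> ?A"
      note f = facts[OF w]
      have "X i \<omega> = y' i" if "i \<le> m + k" for i
      proof -
        show ?thesis
        proof (cases "i \<le> m")
          case True then show ?thesis using w by (simp add: y'_def)
        next
          case False
          show ?thesis
          proof (cases "i = m + k")
            case True then show ?thesis using f b by (simp add: y'_def xp_def)
          next
            case False
            then have "m \<le> i" "i < m + k" using \<open>\<not> i \<le> m\<close> that by auto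
            then show ?thesis using f \<open>\<not> i \<le> m\<close> by (simp add: y'_def xp_def)
          qed
        qed
      qed
      then show "\<omega> \<in> cyl y' (m + k)" using w by (simp add: cyl_def)
    next
      fix \<omega> assume w: "\<omega> \<in> cyl y' (m + k)"
      let ?z = "xp \<omega>"
      have zi: "?z i = y' i" if "i \<le> m + k" for i using w that by (simp add: cyl_def xp_def)
      have agr: "\<forall>i\<le>m. ?z i = y i" using zi by (simp add: y'_def)
      have bz: "brk ?z n = enat m" using brk_det[OF bm agr] .
      have za: "?z i = \<alpha>" if "m \<le> i" "i < m + k" for i
        using zi[of i] that run'[OF that] by (simp add: \<alpha>_def)
      have zg: "?z (m + k) = \<gamma>" using zi[of "m + k"] b by (simp add: y'_def)
      have bz1: "brk ?z (Suc n) = enat (m + k)"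
        unfolding brk_Suc_enat bz
      proof (intro conjI allI impI)
        show "enat m < enat (m + k)" using b by simp
        show "?z (m + k) \<noteq> ?z (m + k - 1)" using zg za[of "m + k - 1"] b by simp
        fix j assume "enat m < enat j \<and> j < m + k"
        then have j: "m < j" "j < m + k" by auto
        have "?z j = \<alpha>" using j by (intro za) auto
        moreover have "?z (j - 1) = \<alpha>" using j by (intro za) auto
        ultimately show "?z j = ?z (j - 1)" by simp
      qed
      have "bendJ ?z (Suc n) = b" using bendJ_Suc[OF bz bz1] za[of m] zg b by simp
      then show "\<omega> \<in> ?A" using w agr bz1 by (simp add: cyl_def xp_def)
    qed
    then have "measure M ?A = measure M (cyl y m) * (\<Prod>j<k. pmf (q (y m, Suc j, prev y m)) (y' (m + Suc j)))"
      using measure_ext[OF y0 bm agr' run'] by simp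
    also have "(\<Prod>j<k. pmf (q (y m, Suc j, prev y m)) (y' (m + Suc j)))
        = (\<Prod>j<k'. pmf (q (\<alpha>, Suc j, \<beta>)) \<alpha>) * pmf (q (\<alpha>, k, \<beta>)) \<gamma>"
    proof -
      have "(\<Prod>j<k'. pmf (q (y m, Suc j, prev y m)) (y' (m + Suc j))) = (\<Prod>j<k'. pmf (q (\<alpha>, Suc j, \<beta>)) \<alpha>)"
        by (rule prod.cong) (auto simp: y'_def \<alpha>_def \<beta>_def b(3))
      moreover have "y' (m + Suc k') = \<gamma>" by (simp add: y'_def b(3))
      ultimately show ?thesis by (simp add: b(3) \<alpha>_def \<beta>_def)
    qed
    also have "(\<Prod>j<k'. pmf (q (\<alpha>, Suc j, \<beta>)) \<alpha>) * pmf (q (\<alpha>, k, \<beta>)) \<gamma> = sm_kernel q (bendJ y n) b k"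
    proof -
      have cond: "\<beta> \<noteq> \<alpha> \<and> \<alpha> = \<alpha> \<and> \<gamma> \<noteq> \<alpha> \<and> Suc k' \<ge> 1" using ba b by simp
      have "sm_kernel q (bendJ y n) b k
          = (\<Prod>j\<in>{1..<Suc k'}. pmf (q (\<alpha>, j, \<beta>)) \<alpha>) * pmf (q (\<alpha>, Suc k', \<beta>)) \<gamma>"
        unfolding sm_kernel_def Jy b(1) b(3) case_prod_conv by (rule if_P[OF cond])
      then show ?thesis unfolding prod_shift1 b(3) by simp
    qed
    finally show ?thesis by simp
  qed
qed

end



context vsetup
begin

lemma cyl_sets': "cyl y m \<in> sets M"
  unfolding cyl_def by (rule cyl_sets)

lemma null_meas:
  assumes y0: "y 0 = E" and bm: "brk y n = enat m"
  shows "measure M {\<omega> \<in> space M. (\<forall>i\<le>m. X i \<omega> = y i) \<and> brk (xp \<omega>) (Suc n) = \<infinity>} = 0"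
proof -
  let ?A = "{\<omega> \<in> space M. (\<forall>i\<le>m. X i \<omega> = y i) \<and> brk (xp \<omega>) (Suc n) = \<infinity>}"
  define \<alpha> where "\<alpha> = y m"
  define \<beta> where "\<beta> = prev y m"
  have ba: "\<alpha> \<noteq> \<beta>" using prev_neq[OF y0 bm] by (simp add: \<alpha>_def \<beta>_def)
  define y'' where "y'' = (\<lambda>i. if i \<le> m then y i else \<alpha>)"
  have agr: "\<forall>i\<le>m. y'' i = y i" by (simp add: y''_def)
  have sub: "?A \<subseteq> cyl y'' (m + K)" for K
  proof
    fix \<omega> assume w: "\<omega> \<in> ?A"
    let ?z = "xp \<omega>"
    have agz: "\<forall>i\<le>m. ?z i = y i" using w by (simp add: xp_def)
    have bz: "brk ?z n = enat m" using brk_det[OF bm agz] .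
    have binf: "brk ?z (Suc n) = \<infinity>" using w by simp
    have c: "?z i = ?z m" if "m \<le> i" for i
      using const_after[of m ?z i, OF brk_Suc_inf[OF binf bz]] that by blast
    have "X i \<omega> = y'' i" if "i \<le> m + K" for i
    proof (cases "i \<le> m")
      case True then show ?thesis using agz by (simp add: y''_def xp_def)
    next
      case False
      then have "?z i = ?z m" by (intro c) simp
      then show ?thesis using False agz by (simp add: y''_def xp_def \<alpha>_def)
    qed
    then show "\<omega> \<in> cyl y'' (m + K)" using w by (simp add: cyl_def)
  qed
  have meq: "measure M (cyl y'' (m + K)) = measure M (cyl y m) * (\<Prod>j<K. pmf (q (\<alpha>, Suc j, \<beta>)) \<alpha>)" for K
  proof -
    have "measure M (cyl y'' (m + K)) = measure M (cyl y m) * (\<Prod>j<K. pmf (q (y m, Suc j, prev y m)) (y'' (m + Suc j)))"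
      by (rule measure_ext[OF y0 bm agr]) (simp add: y''_def \<alpha>_def)
    then show ?thesis by (simp add: y''_def \<alpha>_def \<beta>_def)
  qed
  have le: "measure M ?A \<le> measure M (cyl y m) * (\<Prod>j<K. pmf (q (\<alpha>, Suc j, \<beta>)) \<alpha>)" for K
    using finite_measure_mono[OF sub cyl_sets'] meq by simp
  have "(\<lambda>K. \<Prod>k\<in>{1..K}. pmf (q (\<alpha>, k, \<beta>)) \<alpha>) \<longlonglongrightarrow> 0" by (rule q_lim[OF ba])
  then have "(\<lambda>K. \<Prod>j<K. pmf (q (\<alpha>, Suc j, \<beta>)) \<alpha>) \<longlonglongrightarrow> 0"
    unfolding prod_shift2 .
  then have lim: "(\<lambda>K. measure M (cyl y m) * (\<Prod>j<K. pmf (q (\<alpha>, Suc j, \<beta>)) \<alpha>)) \<longlonglongrightarrow> measure M (cyl y m) * 0"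
    by (rule tendsto_mult_left)
  have "measure M ?A \<le> measure M (cyl y m) * 0"
    by (rule LIMSEQ_le_const[OF lim]) (use le in blast)
  then show ?thesis using measure_nonneg[of M ?A] by simp
qed

lemma AE_fin: "AE \<omega> in M. \<forall>n. brk (xp \<omega>) n \<noteq> \<infinity>"
proof -
  have "AE \<omega> in M. brk (xp \<omega>) n \<noteq> \<infinity>" for n
  proof (induction n)
    case 0 show ?case by (rule AE_I2) (simp add: zero_enat_def)
  next
    case (Suc n)
    define Ns where "Ns m l = {\<omega> \<in> space M. (\<forall>i\<le>m. X i \<omega> = l ! i) \<and> brk (xp \<omega>) n = enat m
                                  \<and> brk (xp \<omega>) (Suc n) = \<infinity>}" for m l
    have Nnull: "Ns m l \<in> null_sets M" for m l
    proof -
      have sets: "Ns m l \<in> sets M"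
      proof -
        have "Ns m l = {\<omega> \<in> space M. (\<lambda>p. (\<forall>i\<le>m. fst p ! i = l ! i) \<and> fst (snd p) = enat m \<and> snd (snd p) = \<infinity>)
                 (map (\<lambda>i. X i \<omega>) [0..<Suc m], (brk (xp \<omega>) n, brk (xp \<omega>) (Suc n)))}"
          by (auto simp: Ns_def nth_pref simp del: upt_Suc)
        also have "\<dots> \<in> sets M"
          by (rule measurable_countable_pred[OF measurable_countable_fun2[OF meas_list
                   measurable_countable_fun2[OF meas_brk meas_brk, where h=Pair], where h=Pair]])
        finally show ?thesis .
      qed
      have "measure M (Ns m l) = 0"
      proof (cases "Ns m l = {}")
        case True then show ?thesis by simp
      next
        case False
        then obtain \<omega>0 where w0: "\<omega>0 \<in> Ns m l" by blast
        let ?y = "xp \<omega>0"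
        have y0: "?y 0 = E" using w0 by (simp add: Ns_def xp0)
        have bm: "brk ?y n = enat m" using w0 by (simp add: Ns_def)
        have l: "l ! i = ?y i" if "i \<le> m" for i using w0 that by (simp add: Ns_def xp_def)
        have "Ns m l = {\<omega> \<in> space M. (\<forall>i\<le>m. X i \<omega> = ?y i) \<and> brk (xp \<omega>) (Suc n) = \<infinity>}"
        proof (intro equalityI subsetI)
          fix \<omega> assume "\<omega> \<in> Ns m l"
          then show "\<omega> \<in> {\<omega> \<in> space M. (\<forall>i\<le>m. X i \<omega> = ?y i) \<and> brk (xp \<omega>) (Suc n) = \<infinity>}"
            using l by (simp add: Ns_def)
        next
          fix \<omega> assume w: "\<omega> \<in> {\<omega> \<in> space M. (\<forall>i\<le>m. X i \<omega> = ?y i) \<and> brk (xp \<omega>) (Suc n) = \<infinity>}"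
          then have "\<forall>i\<le>m. xp \<omega> i = ?y i" by (simp add: xp_def)
          then have "brk (xp \<omega>) n = enat m" using brk_det[OF bm] by simp
          then show "\<omega> \<in> Ns m l" using w l by (simp add: Ns_def)
        qed
        then show ?thesis using null_meas[OF y0 bm] by simp
      qed
      then show ?thesis using sets by (simp add: null_setsI emeasure_eq_measure)
    qed
    have "AE \<omega> in M. \<forall>m. \<forall>l. \<omega> \<notin> Ns m l"
      using Nnull by (simp add: AE_all_countable AE_not_in)
    then show ?case using Suc.IH AE_space
    proof eventually_elim
      case (elim \<omega>)
      then obtain m where bm: "brk (xp \<omega>) n = enat m" by auto
      have "\<omega> \<notin> Ns m (map (\<lambda>i. X i \<omega>) [0..<Suc m])" using elim by blast
      then show "brk (xp \<omega>) (Suc n) \<noteq> \<infinity>" using bm elim by (auto simp: Ns_def nth_pref simp del: upt_Suc)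
    qed
  qed
  then show ?thesis by (simp add: AE_all_countable)
qed

end



lemma soj_fin:
  assumes "brk y n \<noteq> \<infinity>" "brk y (n - 1) \<noteq> \<infinity>"
  shows "soj y n \<in> range enat"
proof -
  obtain a b where "brk y n = enat a" "brk y (n - 1) = enat b" using assms by auto
  then show ?thesis by (auto simp: soj_def zero_enat_def)
qed

context vsetup
begin

lemma trans_soj:
  assumes hS: "\<forall>i\<le>n. h i \<in> bends \<times> range enat" and sS: "s \<in> bends \<times> range enat"
  shows "measure M {\<omega> \<in> space M. (\<forall>i\<le>n. (bendJ (xp \<omega>) i, soj (xp \<omega>) i) = h i)
              \<and> (bendJ (xp \<omega>) (Suc n), soj (xp \<omega>) (Suc n)) = s}
       = (\<lambda>(a, j) (b, k). case k of enat k' \<Rightarrow> sm_kernel q a b k' | \<infinity> \<Rightarrow> 0) (h n) s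
         * measure M {\<omega> \<in> space M. \<forall>i\<le>n. (bendJ (xp \<omega>) i, soj (xp \<omega>) i) = h i}"
proof (cases "{\<omega> \<in> space M. \<forall>i\<le>n. (bendJ (xp \<omega>) i, soj (xp \<omega>) i) = h i} = {}")
  case True
  then have "{\<omega> \<in> space M. (\<forall>i\<le>n. (bendJ (xp \<omega>) i, soj (xp \<omega>) i) = h i)
              \<and> (bendJ (xp \<omega>) (Suc n), soj (xp \<omega>) (Suc n)) = s} = {}" by blast
  then show ?thesis using True by (simp only: measure_empty mult_zero_right)
next
  case False
  then obtain \<omega>0 where w0: "\<omega>0 \<in> space M" "\<forall>i\<le>n. (bendJ (xp \<omega>0) i, soj (xp \<omega>0) i) = h i" by blast
  define y where "y = xp \<omega>0"
  have y0: "y 0 = E" using w0 xp0 by (simp add: y_def)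
  have hy: "h i = (bendJ y i, soj y i)" if "i \<le> n" for i using w0(2) that by (simp add: y_def)
  have "\<forall>i\<le>n. soj y i \<noteq> \<infinity>"
  proof (intro allI impI)
    fix i assume i: "i \<le> n"
    then have "(bendJ y i, soj y i) \<in> bends \<times> range enat" using hS[rule_format, OF i] hy[OF i] by simp
    then show "soj y i \<noteq> \<infinity>" by auto
  qed
  then have "brk y n \<noteq> \<infinity>" by (rule brk_fin_soj)
  then obtain m where bm: "brk y n = enat m" by auto
  have key: "(\<forall>i\<le>n. (bendJ (xp \<omega>) i, soj (xp \<omega>) i) = h i) \<longleftrightarrow> (\<forall>i\<le>m. X i \<omega> = y i)"
    if "\<omega> \<in> space M" for \<omega>
  proof -
    have "(\<forall>i\<le>n. (bendJ (xp \<omega>) i, soj (xp \<omega>) i) = h i)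
        \<longleftrightarrow> (\<forall>i\<le>n. bendJ (xp \<omega>) i = bendJ y i \<and> soj (xp \<omega>) i = soj y i)"
      using hy by auto
    also have "\<dots> \<longleftrightarrow> (\<forall>i\<le>m. xp \<omega> i = y i)"
      using hist_cyl_soj[of y "xp \<omega>" n m, OF y0 xp0[OF that] bm] by simp
    finally show ?thesis by (simp add: xp_def)
  qed
  obtain b k where s: "s = (b, enat k)" using sS by auto
  have key2: "(bendJ (xp \<omega>) (Suc n), soj (xp \<omega>) (Suc n)) = s \<longleftrightarrow>
              brk (xp \<omega>) (Suc n) = enat (m + k) \<and> bendJ (xp \<omega>) (Suc n) = b"
    if "\<forall>i\<le>m. X i \<omega> = y i" for \<omega>
  proof -
    have "\<forall>i\<le>m. xp \<omega> i = y i" using that by (simp add: xp_def)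
    then have "brk (xp \<omega>) n = enat m" by (rule brk_det[OF bm])
    then show ?thesis using soj_iff[of "xp \<omega>" n m k] s by auto
  qed
  have L: "{\<omega> \<in> space M. (\<forall>i\<le>n. (bendJ (xp \<omega>) i, soj (xp \<omega>) i) = h i)
              \<and> (bendJ (xp \<omega>) (Suc n), soj (xp \<omega>) (Suc n)) = s}
     = {\<omega> \<in> space M. (\<forall>i\<le>m. X i \<omega> = y i) \<and> brk (xp \<omega>) (Suc n) = enat (m + k)
                         \<and> bendJ (xp \<omega>) (Suc n) = b}"
    using key key2 by blast
  have H: "{\<omega> \<in> space M. \<forall>i\<le>n. (bendJ (xp \<omega>) i, soj (xp \<omega>) i) = h i} = cyl y m"
    using key by (auto simp: cyl_def)
  have P: "(\<lambda>(a, j) (b, k). case k of enat k' \<Rightarrow> sm_kernel q a b k' | \<infinity> \<Rightarrow> 0) (h n) s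
         = sm_kernel q (bendJ y n) b k"
    using hy[of n] s by simp
  show ?thesis unfolding L H P by (rule kernel_meas[OF y0 bm])
qed

lemma trans_brk:
  assumes hS: "\<forall>i\<le>n. h i \<in> bends \<times> range enat" and sS: "s \<in> bends \<times> range enat"
  shows "measure M {\<omega> \<in> space M. (\<forall>i\<le>n. (bendJ (xp \<omega>) i, brk (xp \<omega>) i) = h i)
              \<and> (bendJ (xp \<omega>) (Suc n), brk (xp \<omega>) (Suc n)) = s}
       = (\<lambda>(a, j) (b, k). case j of enat j' \<Rightarrow> (case k of enat k' \<Rightarrow> sm_kernel q a b (k' - j') | \<infinity> \<Rightarrow> 0)
                                   | \<infinity> \<Rightarrow> 0) (h n) s
         * measure M {\<omega> \<in> space M. \<forall>i\<le>n. (bendJ (xp \<omega>) i, brk (xp \<omega>) i) = h i}"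
proof (cases "{\<omega> \<in> space M. \<forall>i\<le>n. (bendJ (xp \<omega>) i, brk (xp \<omega>) i) = h i} = {}")
  case True
  then have "{\<omega> \<in> space M. (\<forall>i\<le>n. (bendJ (xp \<omega>) i, brk (xp \<omega>) i) = h i)
              \<and> (bendJ (xp \<omega>) (Suc n), brk (xp \<omega>) (Suc n)) = s} = {}" by blast
  then show ?thesis using True by (simp only: measure_empty mult_zero_right)
next
  case False
  then obtain \<omega>0 where w0: "\<omega>0 \<in> space M" "\<forall>i\<le>n. (bendJ (xp \<omega>0) i, brk (xp \<omega>0) i) = h i" by blast
  define y where "y = xp \<omega>0"
  have y0: "y 0 = E" using w0 xp0 by (simp add: y_def)
  have hy: "h i = (bendJ y i, brk y i)" if "i \<le> n" for i using w0(2) that by (simp add: y_def)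
  have "(bendJ y n, brk y n) \<in> bends \<times> range enat" using hS[rule_format, of n] hy[of n] by simp
  then obtain m where bm: "brk y n = enat m" by auto
  have key: "(\<forall>i\<le>n. (bendJ (xp \<omega>) i, brk (xp \<omega>) i) = h i) \<longleftrightarrow> (\<forall>i\<le>m. X i \<omega> = y i)"
    if "\<omega> \<in> space M" for \<omega>
  proof -
    have "(\<forall>i\<le>n. (bendJ (xp \<omega>) i, brk (xp \<omega>) i) = h i)
        \<longleftrightarrow> (\<forall>i\<le>n. bendJ (xp \<omega>) i = bendJ y i \<and> brk (xp \<omega>) i = brk y i)"
      using hy by auto
    also have "\<dots> \<longleftrightarrow> (\<forall>i\<le>m. xp \<omega> i = y i)"
      using hist_cyl_brk[of y "xp \<omega>" n m, OF y0 xp0[OF that] bm] by simp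
    finally show ?thesis by (simp add: xp_def)
  qed
  have H: "{\<omega> \<in> space M. \<forall>i\<le>n. (bendJ (xp \<omega>) i, brk (xp \<omega>) i) = h i} = cyl y m"
    using key by (auto simp: cyl_def)
  obtain b k2 where s: "s = (b, enat k2)" using sS by auto
  have P: "(\<lambda>(a, j) (b, k). case j of enat j' \<Rightarrow> (case k of enat k' \<Rightarrow> sm_kernel q a b (k' - j') | \<infinity> \<Rightarrow> 0)
                                   | \<infinity> \<Rightarrow> 0) (h n) s
         = sm_kernel q (bendJ y n) b (k2 - m)"
    using hy[of n] s bm by simp
  show ?thesis
  proof (cases "m \<le> k2")
    case True
    define k where "k = k2 - m"
    have k2: "k2 = m + k" using True by (simp add: k_def)
    have key2: "(bendJ (xp \<omega>) (Suc n), brk (xp \<omega>) (Suc n)) = s \<longleftrightarrow>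
              brk (xp \<omega>) (Suc n) = enat (m + k) \<and> bendJ (xp \<omega>) (Suc n) = b" for \<omega>
      using s k2 by auto
    have L: "{\<omega> \<in> space M. (\<forall>i\<le>n. (bendJ (xp \<omega>) i, brk (xp \<omega>) i) = h i)
              \<and> (bendJ (xp \<omega>) (Suc n), brk (xp \<omega>) (Suc n)) = s}
     = {\<omega> \<in> space M. (\<forall>i\<le>m. X i \<omega> = y i) \<and> brk (xp \<omega>) (Suc n) = enat (m + k)
                         \<and> bendJ (xp \<omega>) (Suc n) = b}"
      using key key2 by blast
    show ?thesis unfolding L H P k_def[symmetric] by (rule kernel_meas[OF y0 bm])
  next
    case False
    have "{\<omega> \<in> space M. (\<forall>i\<le>n. (bendJ (xp \<omega>) i, brk (xp \<omega>) i) = h i)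
              \<and> (bendJ (xp \<omega>) (Suc n), brk (xp \<omega>) (Suc n)) = s} = {}"
    proof (rule ccontr)
      assume "\<not> ?thesis"
      then obtain \<omega> where w: "\<omega> \<in> space M" "\<forall>i\<le>n. (bendJ (xp \<omega>) i, brk (xp \<omega>) i) = h i"
          "(bendJ (xp \<omega>) (Suc n), brk (xp \<omega>) (Suc n)) = s" by blast
      have "brk (xp \<omega>) n = enat m" using w(2) hy[of n] bm by auto
      moreover have "brk (xp \<omega>) (Suc n) = enat k2" using w(3) s by simp
      ultimately show False using brk_mono_Suc[of "xp \<omega>" n] False by simp
    qed
    moreover have "sm_kernel q (bendJ y n) b (k2 - m) = 0" using False by (simp add: sm_kernel_def split: prod.split)
    ultimately show ?thesis unfolding P by (simp only: measure_empty mult_zero_left)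
  qed
qed

end

theorem mainTheorem2:
  fixes M :: "'a measure"
    and X :: "nat \<Rightarrow> 'a \<Rightarrow> letter"
    and q :: "ctxw \<Rightarrow> letter pmf"
  assumes "prob_space M"
    and q_pos: "\<And>c \<gamma>. is_context c \<Longrightarrow> pmf (q c) \<gamma> > 0"
    and q_lim: "\<And>\<alpha> \<beta>. \<alpha> \<noteq> \<beta> \<Longrightarrow>
                  (\<lambda>n. \<Prod>k\<in>{1..n}. pmf (q (\<alpha>, k, \<beta>)) \<alpha>) \<longlonglongrightarrow> 0"
    and X_meas: "\<And>n. X n \<in> M \<rightarrow>\<^sub>M count_space UNIV"
    and X0: "\<And>\<omega>. \<omega> \<in> space M \<Longrightarrow> X 0 \<omega> = E"
    and vlmc: "\<And>n x. x 0 = E \<Longrightarrow>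
       measure M {\<omega> \<in> space M. \<forall>i\<le>n. X i \<omega> = x i}
         = (\<Prod>i<n. pmf (q (ctx (past x i))) (x (Suc i)))"
  shows "markov_renewal_chain M bends
           (\<lambda>n \<omega>. bendJ (\<lambda>i. X i \<omega>) n) (\<lambda>n \<omega>. soj (\<lambda>i. X i \<omega>) n) (sm_kernel q)
       \<and> (\<forall>\<omega> \<in> space M. semi_markov_assoc (bendJ (\<lambda>i. X i \<omega>))
              (soj (\<lambda>i. X i \<omega>)) (bendZ (\<lambda>i. X i \<omega>)))
       \<and> markov_additive M bends
           (\<lambda>n \<omega>. bendJ (\<lambda>i. X i \<omega>) n) (\<lambda>n \<omega>. brk (\<lambda>i. X i \<omega>) n) (sm_kernel q)"
proof -
  have V: "vsetup M X q"
    by (rule vsetup.intro[OF assms(1)]) (use q_lim X_meas X0 vlmc in \<open>rule vsetup_axioms.intro\<close>)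
  interpret V: vsetup M X q by (rule V)
  have AEf: "AE \<omega> in M. \<forall>n. brk (\<lambda>i. X i \<omega>) n \<noteq> \<infinity>"
    using V.AE_fin unfolding V.xp_def .
  have part1: "markov_renewal_chain M bends
           (\<lambda>n \<omega>. bendJ (\<lambda>i. X i \<omega>) n) (\<lambda>n \<omega>. soj (\<lambda>i. X i \<omega>) n) (sm_kernel q)"
    unfolding markov_renewal_chain_def markov_chain_on_def
  proof (intro conjI allI impI)
    fix a b show "sm_kernel q a b 0 = 0" by (simp add: sm_kernel_def split: prod.split)
  next
    fix n
    show "(\<lambda>\<omega>. (bendJ (\<lambda>i. X i \<omega>) n, soj (\<lambda>i. X i \<omega>) n)) \<in> M \<rightarrow>\<^sub>M count_space UNIV"
      using measurable_countable_fun2[OF V.meas_bendJ V.meas_soj, where h=Pair] unfolding V.xp_def .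
  next
    show "AE \<omega> in M. \<forall>n. (bendJ (\<lambda>i. X i \<omega>) n, soj (\<lambda>i. X i \<omega>) n) \<in> bends \<times> range enat"
      using AEf AE_space
    proof eventually_elim
      case (elim \<omega>)
      have y0: "(\<lambda>i. X i \<omega>) 0 = E" using X0 elim by simp
      show ?case
      proof
        fix n
        obtain m where bm: "brk (\<lambda>i. X i \<omega>) n = enat m" using elim by auto
        have "bendJ (\<lambda>i. X i \<omega>) n \<in> bends" by (rule bendJ_in[OF y0 bm])
        moreover have "soj (\<lambda>i. X i \<omega>) n \<in> range enat" using elim by (intro soj_fin) auto
        ultimately show "(bendJ (\<lambda>i. X i \<omega>) n, soj (\<lambda>i. X i \<omega>) n) \<in> bends \<times> range enat" by simp
      qed
    qed
  next
    fix n and h :: "nat \<Rightarrow> bend \<times> enat" and s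
    assume "\<forall>i\<le>n. h i \<in> bends \<times> range enat" "s \<in> bends \<times> range enat"
    from V.trans_soj[OF this] show "measure M {\<omega> \<in> space M. (\<forall>i\<le>n. (bendJ (\<lambda>i. X i \<omega>) i, soj (\<lambda>i. X i \<omega>) i) = h i)
              \<and> (bendJ (\<lambda>i. X i \<omega>) (Suc n), soj (\<lambda>i. X i \<omega>) (Suc n)) = s}
       = (\<lambda>(a, j) (b, k). case k of enat k' \<Rightarrow> sm_kernel q a b k' | \<infinity> \<Rightarrow> 0) (h n) s
         * measure M {\<omega> \<in> space M. \<forall>i\<le>n. (bendJ (\<lambda>i. X i \<omega>) i, soj (\<lambda>i. X i \<omega>) i) = h i}"
      unfolding V.xp_def .
  qed
  have part2: "\<forall>\<omega> \<in> space M. semi_markov_assoc (bendJ (\<lambda>i. X i \<omega>))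
              (soj (\<lambda>i. X i \<omega>)) (bendZ (\<lambda>i. X i \<omega>))"
    using X0 by (auto intro: semi_markov_path)
  have Teq: "(\<lambda>n \<omega>. if n = 0 then brk (\<lambda>i. X i \<omega>) 0 else brk (\<lambda>i. X i \<omega>) n - brk (\<lambda>i. X i \<omega>) (n - 1))
        = (\<lambda>n \<omega>. soj (\<lambda>i. X i \<omega>) n)"
    by (intro ext) (simp add: soj_def)
  have part3a: "markov_chain_on M (bends \<times> range enat) (\<lambda>n \<omega>. (bendJ (\<lambda>i. X i \<omega>) n, brk (\<lambda>i. X i \<omega>) n))
     (\<lambda>(a, j) (b, k). case j of enat j' \<Rightarrow> (case k of enat k' \<Rightarrow> sm_kernel q a b (k' - j') | \<infinity> \<Rightarrow> 0)
                                   | \<infinity> \<Rightarrow> 0)"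
    unfolding markov_chain_on_def
  proof (intro conjI allI impI)
    fix n
    show "(\<lambda>\<omega>. (bendJ (\<lambda>i. X i \<omega>) n, brk (\<lambda>i. X i \<omega>) n)) \<in> M \<rightarrow>\<^sub>M count_space UNIV"
      using measurable_countable_fun2[OF V.meas_bendJ V.meas_brk, where h=Pair] unfolding V.xp_def .
  next
    show "AE \<omega> in M. \<forall>n. (bendJ (\<lambda>i. X i \<omega>) n, brk (\<lambda>i. X i \<omega>) n) \<in> bends \<times> range enat"
      using AEf AE_space
    proof eventually_elim
      case (elim \<omega>)
      have y0: "(\<lambda>i. X i \<omega>) 0 = E" using X0 elim by simp
      show ?case
      proof
        fix n
        obtain m where bm: "brk (\<lambda>i. X i \<omega>) n = enat m" using elim by auto
        have "bendJ (\<lambda>i. X i \<omega>) n \<in> bends" by (rule bendJ_in[OF y0 bm])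
        then show "(bendJ (\<lambda>i. X i \<omega>) n, brk (\<lambda>i. X i \<omega>) n) \<in> bends \<times> range enat" using bm by simp
      qed
    qed
  next
    fix n and h :: "nat \<Rightarrow> bend \<times> enat" and s
    assume "\<forall>i\<le>n. h i \<in> bends \<times> range enat" "s \<in> bends \<times> range enat"
    from V.trans_brk[OF this] show "measure M {\<omega> \<in> space M. (\<forall>i\<le>n. (bendJ (\<lambda>i. X i \<omega>) i, brk (\<lambda>i. X i \<omega>) i) = h i)
              \<and> (bendJ (\<lambda>i. X i \<omega>) (Suc n), brk (\<lambda>i. X i \<omega>) (Suc n)) = s}
       = (\<lambda>(a, j) (b, k). case j of enat j' \<Rightarrow> (case k of enat k' \<Rightarrow> sm_kernel q a b (k' - j') | \<infinity> \<Rightarrow> 0)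
                                   | \<infinity> \<Rightarrow> 0) (h n) s
         * measure M {\<omega> \<in> space M. \<forall>i\<le>n. (bendJ (\<lambda>i. X i \<omega>) i, brk (\<lambda>i. X i \<omega>) i) = h i}"
      unfolding V.xp_def .
  qed
  have part3: "markov_additive M bends
           (\<lambda>n \<omega>. bendJ (\<lambda>i. X i \<omega>) n) (\<lambda>n \<omega>. brk (\<lambda>i. X i \<omega>) n) (sm_kernel q)"
    unfolding markov_additive_def Teq using part1 part3a by blast
  show ?thesis using part1 part2 part3 by blast
qed


end
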